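(* Let $S$ be a gcd-category and $a,b\in S$. (1) If $\mathrm{s}(a)=\mathrm{s}(b)$, the following are equivalent: $\varepsilon_S(a),\varepsilon_S(b)$ have a right lcm in $\mathrm{U_{mon}}(S)$; $\varepsilon_S(a),\varepsilon_S(b)$ have a common right multiple in $\mathrm{U_{mon}}(S)$; $a,b$ have a right lcm $a\vee b$ in $S$; $a,b$ have a common right multiple in $S$. When these hold, $\varepsilon_S(a\vee b)$ is the right lcm of $\varepsilon_S(a),\varepsilon_S(b)$. (2) Dually, if $\mathrm{t}(a)=\mathrm{t}(b)$, the following are equivalent: $\varepsilon_S(a),\varepsilon_S(b)$ have a left lcm in $\mathrm{U_{mon}}(S)$; they have a common left multiple there; $a,b$ have a left lcm $a\mathbin{\widetilde\vee} b$ in $S$; $a,b$ have a common left multiple in $S$; and then $\varepsilon_S(a\mathbin{\widetilde\vee} b)$ is the left lcm of $\varepsilon_S(a),\varepsilon_S(b)$.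
   Context: Categories are arrow-only: a set $S$ with partial associative multiplication, identities $\mathrm{Id}\,S$, source/target identities $\mathrm{s}(x),\mathrm{t}(x)$. $\mathrm{U_{mon}}(S)$ is the monoid presented by generators $\varepsilon_S(x)$ ($x\in S$) and relations $\varepsilon_S(e)=1$ ($e\in\mathrm{Id}\,S$), $\varepsilon_S(x)\varepsilon_S(y)=\varepsilon_S(xy)$ whenever $xy$ is defined. In a category or monoid $C$, $a\leqslant_C b$ iff $b=ax$ for some $x$ ($b$ is a right multiple of $a$), and $a\mathbin{\widetilde\leqslant}_C b$ iff $b=xa$ for some $x$ ($b$ a left multiple of $a$). Right lcm = least upper bound for $\leqslant$; left lcm = least upper bound for $\mathbin{\widetilde\leqslant}$; left/right gcd = greatest lower bound for $\leqslant$/$\mathbin{\widetilde\leqslant}$. $S$ is conical if $xy\in\mathrm{Id}\,S$ implies $x\in\mathrm{Id}\,S$. A gcd-category is a conical, left and right cancellative category in which any two elements with the same source have a left gcd and any two elements with the same target have a right gcd. *)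

theory Defs
  imports Main
begin

text \<open>Arrow-only categories: a carrier set S of arrows and a partial
multiplication C, where C x y = Some z means that xy is defined and equals z.\<close>

definition is_ident :: "'a set \<Rightarrow> ('a \<Rightarrow> 'a \<Rightarrow> 'a option) \<Rightarrow> 'a \<Rightarrow> bool" where
  "is_ident S C e \<longleftrightarrow> e \<in> S \<and>
     (\<forall>x\<in>S. (C e x \<noteq> None \<longrightarrow> C e x = Some x) \<and> (C x e \<noteq> None \<longrightarrow> C x e = Some x))"

definition Ids :: "'a set \<Rightarrow> ('a \<Rightarrow> 'a \<Rightarrow> 'a option) \<Rightarrow> 'a set" where
  "Ids S C = {e. is_ident S C e}"

definition category :: "'a set \<Rightarrow> ('a \<Rightarrow> 'a \<Rightarrow> 'a option) \<Rightarrow> bool" where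
  "category S C \<longleftrightarrow>
     (\<forall>x y z. C x y = Some z \<longrightarrow> x \<in> S \<and> y \<in> S \<and> z \<in> S) \<and>
     (\<forall>x\<in>S. \<forall>y\<in>S. \<forall>z\<in>S.
        Option.bind (C x y) (\<lambda>u. C u z) = Option.bind (C y z) (\<lambda>v. C x v)) \<and>
     (\<forall>x\<in>S. \<forall>y\<in>S. \<forall>z\<in>S. C x y \<noteq> None \<longrightarrow> C y z \<noteq> None \<longrightarrow>
        Option.bind (C x y) (\<lambda>u. C u z) \<noteq> None) \<and>
     (\<forall>x\<in>S. (\<exists>e. is_ident S C e \<and> C e x \<noteq> None) \<and> (\<exists>e. is_ident S C e \<and> C x e \<noteq> None))"

definition src :: "'a set \<Rightarrow> ('a \<Rightarrow> 'a \<Rightarrow> 'a option) \<Rightarrow> 'a \<Rightarrow> 'a" where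
  "src S C x = (THE e. is_ident S C e \<and> C e x \<noteq> None)"

definition tgt :: "'a set \<Rightarrow> ('a \<Rightarrow> 'a \<Rightarrow> 'a option) \<Rightarrow> 'a \<Rightarrow> 'a" where
  "tgt S C x = (THE e. is_ident S C e \<and> C x e \<noteq> None)"

definition cleq :: "'a set \<Rightarrow> ('a \<Rightarrow> 'a \<Rightarrow> 'a option) \<Rightarrow> 'a \<Rightarrow> 'a \<Rightarrow> bool" where
  "cleq S C a b \<longleftrightarrow> (\<exists>x\<in>S. C a x = Some b)"

definition cleqL :: "'a set \<Rightarrow> ('a \<Rightarrow> 'a \<Rightarrow> 'a option) \<Rightarrow> 'a \<Rightarrow> 'a \<Rightarrow> bool" where
  "cleqL S C a b \<longleftrightarrow> (\<exists>x\<in>S. C x a = Some b)"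

definition is_lub :: "'b set \<Rightarrow> ('b \<Rightarrow> 'b \<Rightarrow> bool) \<Rightarrow> 'b \<Rightarrow> 'b \<Rightarrow> 'b \<Rightarrow> bool" where
  "is_lub A R a b m \<longleftrightarrow> m \<in> A \<and> R a m \<and> R b m \<and> (\<forall>w\<in>A. R a w \<longrightarrow> R b w \<longrightarrow> R m w)"

definition is_glb :: "'b set \<Rightarrow> ('b \<Rightarrow> 'b \<Rightarrow> bool) \<Rightarrow> 'b \<Rightarrow> 'b \<Rightarrow> 'b \<Rightarrow> bool" where
  "is_glb A R a b d \<longleftrightarrow> d \<in> A \<and> R d a \<and> R d b \<and> (\<forall>c\<in>A. R c a \<longrightarrow> R c b \<longrightarrow> R c d)"

definition gcd_category :: "'a set \<Rightarrow> ('a \<Rightarrow> 'a \<Rightarrow> 'a option) \<Rightarrow> bool" where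
  "gcd_category S C \<longleftrightarrow> category S C \<and>
     (\<forall>x y. C x y \<noteq> None \<longrightarrow> C x y \<in> Some ` Ids S C \<longrightarrow> x \<in> Ids S C) \<and>
     (\<forall>x y z. C x y \<noteq> None \<longrightarrow> C x y = C x z \<longrightarrow> y = z) \<and>
     (\<forall>x y z. C y x \<noteq> None \<longrightarrow> C y x = C z x \<longrightarrow> y = z) \<and>
     (\<forall>a\<in>S. \<forall>b\<in>S. src S C a = src S C b \<longrightarrow> (\<exists>d. is_glb S (cleq S C) a b d)) \<and>
     (\<forall>a\<in>S. \<forall>b\<in>S. tgt S C a = tgt S C b \<longrightarrow> (\<exists>d. is_glb S (cleqL S C) a b d))"

text \<open>The monoid U_mon(S): words over S modulo the congruence generated by
  [e] ~ [] (e an identity) and [x,y] ~ [xy] (xy defined).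
  The word [x] represents eps_S(x); concatenation is the product.\<close>

inductive ueq :: "'a set \<Rightarrow> ('a \<Rightarrow> 'a \<Rightarrow> 'a option) \<Rightarrow> 'a list \<Rightarrow> 'a list \<Rightarrow> bool"
  for S C where
  ueq_refl: "ueq S C u u"
| ueq_sym: "ueq S C u v \<Longrightarrow> ueq S C v u"
| ueq_trans: "ueq S C u v \<Longrightarrow> ueq S C v w \<Longrightarrow> ueq S C u w"
| ueq_ctxt: "ueq S C u v \<Longrightarrow> ueq S C (p @ u @ q) (p @ v @ q)"
| ueq_id: "e \<in> Ids S C \<Longrightarrow> ueq S C [e] []"
| ueq_mult: "C x y = Some z \<Longrightarrow> ueq S C [x, y] [z]"

definition uleq :: "'a set \<Rightarrow> ('a \<Rightarrow> 'a \<Rightarrow> 'a option) \<Rightarrow> 'a list \<Rightarrow> 'a list \<Rightarrow> bool" where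
  "uleq S C u v \<longleftrightarrow> (\<exists>x\<in>lists S. ueq S C (u @ x) v)"

definition uleqL :: "'a set \<Rightarrow> ('a \<Rightarrow> 'a \<Rightarrow> 'a option) \<Rightarrow> 'a list \<Rightarrow> 'a list \<Rightarrow> bool" where
  "uleqL S C u v \<longleftrightarrow> (\<exists>x\<in>lists S. ueq S C (x @ u) v)"

end

theory Submission imports Defs begin

locale gc = fixes S :: "'a set" and C :: "'a \<Rightarrow> 'a \<Rightarrow> 'a option"
  assumes gcd: "gcd_category S C"
begin

lemma cat: "category S C" using gcd unfolding gcd_category_def by blast

lemma clos: "C x y = Some z \<Longrightarrow> x \<in> S \<and> y \<in> S \<and> z \<in> S"
  using cat unfolding category_def by blast

lemma assoc_eq: "x\<in>S \<Longrightarrow> y\<in>S \<Longrightarrow> z\<in>S \<Longrightarrow>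
   Option.bind (C x y) (\<lambda>u. C u z) = Option.bind (C y z) (\<lambda>v. C x v)"
  using cat unfolding category_def by blast

lemma compos0: "x\<in>S \<Longrightarrow> y\<in>S \<Longrightarrow> z\<in>S \<Longrightarrow> C x y \<noteq> None \<Longrightarrow> C y z \<noteq> None \<Longrightarrow>
   Option.bind (C x y) (\<lambda>u. C u z) \<noteq> None"
  using cat unfolding category_def by blast

lemma assoc1: assumes "C x y = Some u" "C u z = Some w"
  shows "\<exists>v. C y z = Some v \<and> C x v = Some w"
proof -
  have "x \<in> S" "y \<in> S" "z \<in> S" using clos assms by blast+
  from assoc_eq[OF this] assms have "Option.bind (C y z) (\<lambda>v. C x v) = Some w" by simp
  then show ?thesis by (cases "C y z") auto
qed

lemma assoc2: assumes "C y z = Some v" "C x v = Some w"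
  shows "\<exists>u. C x y = Some u \<and> C u z = Some w"
proof -
  have "x \<in> S" "y \<in> S" "z \<in> S" using clos assms by blast+
  from assoc_eq[OF this] assms have "Option.bind (C x y) (\<lambda>u. C u z) = Some w" by simp
  then show ?thesis by (cases "C x y") auto
qed

lemma compos: assumes "C x y = Some u" "C y z = Some v"
  shows "\<exists>w. C u z = Some w \<and> C x v = Some w"
proof -
  have "x \<in> S" "y \<in> S" "z \<in> S" using clos assms by blast+
  from compos0[OF this] assms have "C u z \<noteq> None" by simp
  then obtain w where w: "C u z = Some w" by auto
  from assoc1[OF assms(1) w] assms show ?thesis using w by auto
qed

lemma Ids_S: "e \<in> Ids S C \<Longrightarrow> e \<in> S" unfolding Ids_def is_ident_def by auto

lemma ident_l: assumes "e \<in> Ids S C" "C e x = Some y" shows "y = x"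
proof -
  have "x \<in> S" using clos assms by blast
  moreover have "is_ident S C e" using assms by (simp add: Ids_def)
  ultimately have "C e x \<noteq> None \<longrightarrow> C e x = Some x" unfolding is_ident_def by blast
  then show ?thesis using assms by simp
qed

lemma ident_r: assumes "e \<in> Ids S C" "C x e = Some y" shows "y = x"
proof -
  have "x \<in> S" using clos assms by blast
  moreover have "is_ident S C e" using assms by (simp add: Ids_def)
  ultimately have "C x e \<noteq> None \<longrightarrow> C x e = Some x" unfolding is_ident_def by blast
  then show ?thesis using assms by simp
qed

lemma has_src: assumes "x \<in> S" shows "\<exists>e. e \<in> Ids S C \<and> C e x = Some x"
proof -
  obtain e where e: "is_ident S C e" "C e x \<noteq> None" using cat assms unfolding category_def by blast
  then obtain y where y: "C e x = Some y" by auto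
  have "e \<in> Ids S C" using e by (simp add: Ids_def)
  with ident_l[OF this y] y show ?thesis by auto
qed

lemma has_tgt: assumes "x \<in> S" shows "\<exists>e. e \<in> Ids S C \<and> C x e = Some x"
proof -
  obtain e where e: "is_ident S C e" "C x e \<noteq> None" using cat assms unfolding category_def by blast
  then obtain y where y: "C x e = Some y" by auto
  have "e \<in> Ids S C" using e by (simp add: Ids_def)
  with ident_r[OF this y] y show ?thesis by auto
qed

lemma src_unique: assumes "e \<in> Ids S C" "e' \<in> Ids S C" "C e x \<noteq> None" "C e' x \<noteq> None"
  shows "e = e'"
proof -
  obtain y y' where yy: "C e x = Some y" "C e' x = Some y'" using assms by auto
  have 1: "C e x = Some x" "C e' x = Some x" using yy ident_l[OF assms(1) yy(1)] ident_l[OF assms(2) yy(2)] by simp_all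
  from assoc2[OF 1(1) 1(2)] obtain u where u: "C e' e = Some u" by auto
  have "u = e" using ident_l[OF assms(2) u] .
  moreover have "u = e'" using ident_r[OF assms(1) u] .
  ultimately show ?thesis by simp
qed

lemma tgt_unique: assumes "e \<in> Ids S C" "e' \<in> Ids S C" "C x e \<noteq> None" "C x e' \<noteq> None"
  shows "e = e'"
proof -
  obtain y y' where yy: "C x e = Some y" "C x e' = Some y'" using assms by auto
  have 1: "C x e = Some x" "C x e' = Some x" using yy ident_r[OF assms(1) yy(1)] ident_r[OF assms(2) yy(2)] by simp_all
  from assoc1[OF 1(1) 1(2)] obtain v where v: "C e e' = Some v" by auto
  have "v = e'" using ident_l[OF assms(1) v] .
  moreover have "v = e" using ident_r[OF assms(2) v] .
  ultimately show ?thesis by simp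
qed

lemma src: assumes "x \<in> S" shows "src S C x \<in> Ids S C \<and> C (src S C x) x = Some x"
proof -
  obtain e where e: "e \<in> Ids S C" "C e x = Some x" using has_src assms by blast
  have "src S C x = e" unfolding src_def
  proof (rule the_equality)
    show "is_ident S C e \<and> C e x \<noteq> None" using e by (simp add: Ids_def)
  next
    fix e' assume "is_ident S C e' \<and> C e' x \<noteq> None"
    then show "e' = e" using src_unique[of e' e x] e by (simp add: Ids_def)
  qed
  then show ?thesis using e by simp
qed

lemma tgt: assumes "x \<in> S" shows "tgt S C x \<in> Ids S C \<and> C x (tgt S C x) = Some x"
proof -
  obtain e where e: "e \<in> Ids S C" "C x e = Some x" using has_tgt assms by blast
  have "tgt S C x = e" unfolding tgt_def
  proof (rule the_equality)
    show "is_ident S C e \<and> C x e \<noteq> None" using e by (simp add: Ids_def)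
  next
    fix e' assume "is_ident S C e' \<and> C x e' \<noteq> None"
    then show "e' = e" using tgt_unique[of e' e x] e by (simp add: Ids_def)
  qed
  then show ?thesis using e by simp
qed

lemma src_eq: assumes "e \<in> Ids S C" "C e x \<noteq> None" shows "src S C x = e"
proof -
  obtain y where "C e x = Some y" using assms by auto
  then have "x \<in> S" using clos by blast
  from src[OF this] show ?thesis using src_unique[of e "src S C x" x] assms by auto
qed

lemma tgt_eq: assumes "e \<in> Ids S C" "C x e \<noteq> None" shows "tgt S C x = e"
proof -
  obtain y where "C x e = Some y" using assms by auto
  then have "x \<in> S" using clos by blast
  from tgt[OF this] show ?thesis using tgt_unique[of e "tgt S C x" x] assms by auto
qed

lemma src_tgt_prod: assumes "C x y = Some z" shows "src S C z = src S C x" "tgt S C z = tgt S C y"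
proof -
  have S: "x \<in> S" "y \<in> S" "z \<in> S" using clos assms by blast+
  from src[OF S(1)] obtain e where e: "e \<in> Ids S C" "C e x = Some x" "e = src S C x" by blast
  from compos[OF e(2) assms] have "C e z \<noteq> None" by auto
  then show "src S C z = src S C x" using src_eq e by blast
  from tgt[OF S(2)] obtain f where f: "f \<in> Ids S C" "C y f = Some y" "f = tgt S C y" by blast
  from compos[OF assms f(2)] have "C z f \<noteq> None" by auto
  then show "tgt S C z = tgt S C y" using tgt_eq f by blast
qed

lemma gcd_parts:
  "\<forall>x y. C x y \<noteq> None \<longrightarrow> C x y \<in> Some ` Ids S C \<longrightarrow> x \<in> Ids S C"
  "\<forall>x y z. C x y \<noteq> None \<longrightarrow> C x y = C x z \<longrightarrow> y = z"
  "\<forall>x y z. C y x \<noteq> None \<longrightarrow> C y x = C z x \<longrightarrow> y = z"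
  "\<forall>a\<in>S. \<forall>b\<in>S. src S C a = src S C b \<longrightarrow> (\<exists>d. is_glb S (cleq S C) a b d)"
  "\<forall>a\<in>S. \<forall>b\<in>S. tgt S C a = tgt S C b \<longrightarrow> (\<exists>d. is_glb S (cleqL S C) a b d)"
  using gcd unfolding gcd_category_def by blast+

lemma cancel_l: assumes "C x y = Some z" "C x y' = Some z" shows "y = y'"
  using gcd_parts(2)[rule_format, of x y y'] assms by simp

lemma cancel_r: assumes "C y x = Some z" "C y' x = Some z" shows "y = y'"
  using gcd_parts(3)[rule_format, of y x y'] assms by simp

lemma conical: assumes "C x y = Some e" "e \<in> Ids S C" shows "x \<in> Ids S C"
  using gcd_parts(1) assms by auto

lemma cleq_refl: assumes "a \<in> S" shows "cleq S C a a"
  using tgt[OF assms] Ids_S unfolding cleq_def by blast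

lemma cleq_trans: assumes "cleq S C a b" "cleq S C b c" shows "cleq S C a c"
proof -
  obtain x y where xy: "x \<in> S" "C a x = Some b" "y \<in> S" "C b y = Some c"
    using assms unfolding cleq_def by blast
  from assoc1[OF xy(2) xy(4)] obtain v where "C x y = Some v" "C a v = Some c" by blast
  then show ?thesis unfolding cleq_def using clos by blast
qed


lemma cleq_S: "cleq S C a b \<Longrightarrow> a \<in> S \<and> b \<in> S"
  unfolding cleq_def using clos by blast

lemma lcm_exists:
  assumes ab: "a \<in> S" "b \<in> S" "src S C a = src S C b"
    and w: "w \<in> S" "cleq S C a w" "cleq S C b w"
  shows "\<exists>m. is_lub S (cleq S C) a b m"
proof -
  obtain a' b' where ab': "a' \<in> S" "C a a' = Some w" "b' \<in> S" "C b b' = Some w"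
    using w unfolding cleq_def by blast
  have "tgt S C a' = tgt S C b'" using src_tgt_prod(2)[OF ab'(2)] src_tgt_prod(2)[OF ab'(4)] by simp
  then obtain c where glbc: "is_glb S (cleqL S C) a' b' c" using gcd_parts(5) ab' by blast
  then have cS: "c \<in> S" and "cleqL S C c a'" "cleqL S C c b'" unfolding is_glb_def by auto
  then obtain a'' b'' where a'': "a'' \<in> S" "C a'' c = Some a'" and b'': "b'' \<in> S" "C b'' c = Some b'"
    unfolding cleqL_def by blast
  from assoc2[OF a''(2) ab'(2)] obtain m where m: "C a a'' = Some m" "C m c = Some w" by blast
  from assoc2[OF b''(2) ab'(4)] obtain m2 where m2: "C b b'' = Some m2" "C m2 c = Some w" by blast
  have "m2 = m" using cancel_r[OF m2(2) m(2)] .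
  with m2 have m2': "C b b'' = Some m" by simp
  have mS: "m \<in> S" using clos m by blast
  have am: "cleq S C a m" using m a'' unfolding cleq_def by blast
  have bm: "cleq S C b m" using m2' b'' unfolding cleq_def by blast
  have "cleq S C m w2" if w2: "w2 \<in> S" "cleq S C a w2" "cleq S C b w2" for w2
  proof -
    have "src S C m = src S C a" using src_tgt_prod(1)[OF m(1)] .
    moreover obtain x where "C a x = Some w2" using w2 unfolding cleq_def by blast
    then have "src S C w2 = src S C a" using src_tgt_prod(1) by blast
    ultimately obtain d where glbd: "is_glb S (cleq S C) m w2 d" using gcd_parts(4) mS w2 by metis
    then have dS: "d \<in> S" and dm: "cleq S C d m" and dw: "cleq S C d w2"
      and dmax: "\<And>c. c \<in> S \<Longrightarrow> cleq S C c m \<Longrightarrow> cleq S C c w2 \<Longrightarrow> cleq S C c d"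
      unfolding is_glb_def by auto
    have "cleq S C a d" using dmax ab(1) am w2(2) by blast
    then obtain p where p: "p \<in> S" "C a p = Some d" unfolding cleq_def by blast
    have "cleq S C b d" using dmax ab(2) bm w2(3) by blast
    then obtain q where q: "q \<in> S" "C b q = Some d" unfolding cleq_def by blast
    obtain r where r: "r \<in> S" "C d r = Some m" using dm unfolding cleq_def by blast
    from assoc1[OF p(2) r(2)] obtain v where v: "C p r = Some v" "C a v = Some m" by blast
    have "v = a''" using cancel_l[OF v(2) m(1)] .
    with v have pr: "C p r = Some a''" by simp
    from assoc1[OF q(2) r(2)] obtain v' where v': "C q r = Some v'" "C b v' = Some m" by blast
    have "v' = b''" using cancel_l[OF v'(2) m2'] .
    with v' have qr: "C q r = Some b''" by simp
    from assoc1[OF pr a''(2)] obtain rc where rc: "C r c = Some rc" "C p rc = Some a'" by blast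
    from assoc1[OF qr b''(2)] obtain rc' where rc': "C r c = Some rc'" "C q rc' = Some b'" by blast
    have "rc' = rc" using rc rc' by simp
    with rc' have rc'': "C q rc = Some b'" by simp
    have rcS: "rc \<in> S" using clos rc by blast
    have "cleqL S C rc a'" using rc(2) p(1) unfolding cleqL_def by blast
    moreover have "cleqL S C rc b'" using rc'' q(1) unfolding cleqL_def by blast
    ultimately have "cleqL S C rc c" using glbc rcS unfolding is_glb_def by blast
    then obtain z where z: "z \<in> S" "C z rc = Some c" unfolding cleqL_def by blast
    from assoc2[OF rc(1) z(2)] obtain u where u: "C z r = Some u" "C u c = Some c" by blast
    have sc: "src S C c \<in> Ids S C" "C (src S C c) c = Some c" using src[OF cS] by auto
    have "u = src S C c" using cancel_r[OF u(2) sc(2)] .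
    with sc have uI: "u \<in> Ids S C" by simp
    have zI: "z \<in> Ids S C" using conical[OF u(1) uI] .
    have "u = r" using ident_l[OF zI u(1)] .
    with uI have rI: "r \<in> Ids S C" by simp
    have "m = d" using ident_r[OF rI r(2)] .
    then show ?thesis using dw by simp
  qed
  then show ?thesis using mS am bm unfolding is_lub_def by blast
qed

definition push :: "'a \<Rightarrow> 'a list \<Rightarrow> 'a list" where
  "push x s = (if x \<in> Ids S C then s
     else if s \<noteq> [] \<and> C (last s) x \<noteq> None then butlast s @ [the (C (last s) x)]
     else s @ [x])"

definition nf :: "'a list \<Rightarrow> 'a list" where "nf u = foldl (\<lambda>s x. push x s) [] u"

lemma push_id: "x \<in> Ids S C \<Longrightarrow> push x s = s" unfolding push_def by simp

lemma push_merge: "x \<notin> Ids S C \<Longrightarrow> s \<noteq> [] \<Longrightarrow> C (last s) x = Some z \<Longrightarrow> push x s = butlast s @ [z]"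
  unfolding push_def by simp

lemma push_app: "x \<notin> Ids S C \<Longrightarrow> s = [] \<or> C (last s) x = None \<Longrightarrow> push x s = s @ [x]"
  unfolding push_def by auto

lemma pushK: assumes yx: "C y x = Some z" shows "push x (push y r) = push z r"
proof (cases "x \<in> Ids S C")
  case True
  then have "z = y" using ident_r yx by blast
  then show ?thesis using True by (simp add: push_id)
next
  case xn: False
  show ?thesis
  proof (cases "y \<in> Ids S C")
    case True
    then have "z = x" using ident_l yx by blast
    then show ?thesis using True by (simp add: push_id)
  next
    case yn: False
    have zn: "z \<notin> Ids S C" using conical yx yn by blast
    show ?thesis
    proof (cases "r \<noteq> [] \<and> C (last r) y \<noteq> None")
      case True
      then obtain q where q: "C (last r) y = Some q" and rn: "r \<noteq> []" by auto
      from compos[OF q yx] obtain t where t: "C q x = Some t" "C (last r) z = Some t" by blast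
      have "push y r = butlast r @ [q]" using push_merge[OF yn rn q] .
      moreover have "push x (butlast r @ [q]) = butlast r @ [t]"
        using push_merge[OF xn, of "butlast r @ [q]" t] t by simp
      moreover have "push z r = butlast r @ [t]" using push_merge[OF zn rn t(2)] .
      ultimately show ?thesis by simp
    next
      case False
      then have "push y r = r @ [y]" using push_app[OF yn] by auto
      moreover have "push x (r @ [y]) = r @ [z]"
        using push_merge[OF xn, of "r @ [y]" z] yx by simp
      moreover have "push z r = r @ [z]"
      proof (cases "r = []")
        case True then show ?thesis using push_app[OF zn] by simp
      next
        case rn: False
        have "C (last r) z = None"
        proof (rule ccontr)
          assume "C (last r) z \<noteq> None"
          then obtain t where "C (last r) z = Some t" by auto
          from assoc2[OF yx this] False rn show False by auto
        qed
        then show ?thesis using push_app[OF zn] by simp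
      qed
      ultimately show ?thesis by simp
    qed
  qed
qed

lemma foldl_push: "foldl (\<lambda>s x. push x s) s (push x t) = push x (foldl (\<lambda>s x. push x s) s t)"
proof (cases "x \<in> Ids S C")
  case True then show ?thesis by (simp add: push_id)
next
  case xn: False
  show ?thesis
  proof (cases "t \<noteq> [] \<and> C (last t) x \<noteq> None")
    case True
    then obtain z where z: "C (last t) x = Some z" and tn: "t \<noteq> []" by auto
    obtain t' y where t: "t = t' @ [y]" using tn by (metis append_butlast_last_id)
    have "push x t = t' @ [z]" using push_merge[OF xn tn z] t by simp
    then show ?thesis using pushK[of y x z] z t by simp
  next
    case False
    then have "push x t = t @ [x]" using push_app[OF xn] by auto
    then show ?thesis by simp
  qed
qed

lemma foldl_nf: "foldl (\<lambda>s x. push x s) s u = foldl (\<lambda>s x. push x s) s (nf u)"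
proof (induction u rule: rev_induct)
  case Nil then show ?case by (simp add: nf_def)
next
  case (snoc x u)
  then show ?case by (simp add: nf_def foldl_push)
qed

lemma nf_append: "nf (u @ v) = foldl (\<lambda>s x. push x s) (nf u) v"
  by (simp add: nf_def)

lemma ueq_nf_eq: "ueq S C u v \<Longrightarrow> nf u = nf v"
proof (induction rule: ueq.induct)
  case (ueq_ctxt u v p q)
  have "nf (p @ u @ q) = foldl (\<lambda>s x. push x s) (foldl (\<lambda>s x. push x s) (nf p) (nf u)) q"
    using foldl_nf[of "nf p" u] by (simp add: nf_append)
  moreover have "nf (p @ v @ q) = foldl (\<lambda>s x. push x s) (foldl (\<lambda>s x. push x s) (nf p) (nf v)) q"
    using foldl_nf[of "nf p" v] by (simp add: nf_append)
  ultimately show ?case using ueq_ctxt.IH by simp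
next
  case (ueq_id e) then show ?case by (simp add: nf_def push_id)
next
  case (ueq_mult x y z) then show ?case by (simp add: nf_def pushK)
qed auto

lemma ueq_app: "ueq S C u v \<Longrightarrow> ueq S C (p @ u @ q) (p @ v @ q)"
  by (rule ueq_ctxt)

lemma ueq_push: "ueq S C (r @ [x]) (push x r)"
proof (cases "x \<in> Ids S C")
  case True
  then show ?thesis using ueq_ctxt[OF ueq_id[OF True], of r "[]"] by (simp add: push_id)
next
  case xn: False
  show ?thesis
  proof (cases "r \<noteq> [] \<and> C (last r) x \<noteq> None")
    case True
    then obtain z where z: "C (last r) x = Some z" and rn: "r \<noteq> []" by auto
    have "ueq S C (butlast r @ [last r, x] @ []) (butlast r @ [z] @ [])"
      by (rule ueq_ctxt[OF ueq_mult[where S=S and C=C, OF z]])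
    moreover have "butlast r @ [last r, x] @ [] = r @ [x]" using rn
      by (metis append.assoc append_Cons append_Nil append_butlast_last_id)
    ultimately show ?thesis using push_merge[OF xn rn z] by (simp only: append_Nil2)
  next
    case False
    then show ?thesis using push_app[OF xn] by (auto intro: ueq_refl)
  qed
qed

lemma ueq_to_nf: "ueq S C u (nf u)"
proof (induction u rule: rev_induct)
  case Nil then show ?case by (simp add: nf_def ueq_refl)
next
  case (snoc x u)
  have "ueq S C ([] @ u @ [x]) ([] @ nf u @ [x])" by (rule ueq_ctxt[OF snoc.IH])
  moreover have "ueq S C (nf u @ [x]) (nf (u @ [x]))" using ueq_push by (simp add: nf_def)
  ultimately show ?case by (auto intro: ueq_trans)
qed


lemma push_step: assumes "s \<noteq> []" "hd s \<in> S"
  shows "push y s \<noteq> [] \<and> hd (push y s) \<in> S \<and> cleq S C (hd s) (hd (push y s))"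
proof (cases "y \<in> Ids S C")
  case True then show ?thesis using assms cleq_refl by (simp add: push_id)
next
  case yn: False
  show ?thesis
  proof (cases "C (last s) y \<noteq> None")
    case True
    then obtain z where z: "C (last s) y = Some z" by auto
    have p: "push y s = butlast s @ [z]" using push_merge[OF yn assms(1) z] .
    show ?thesis
    proof (cases "butlast s = []")
      case True
      then have "last s = hd s" using assms(1) by (metis append_butlast_last_id append_Nil hd_Cons_tl last_ConsL list.sel(1))
      then have "cleq S C (hd s) z" using z clos unfolding cleq_def by auto
      then show ?thesis using p True cleq_S by auto
    next
      case False
      have "hd (butlast s @ [z]) = hd s" using False
        by (metis append_butlast_last_id assms(1) hd_append2)
      then show ?thesis using p assms cleq_refl by simp
    qed
  next
    case False
    then show ?thesis using push_app[OF yn] assms cleq_refl by simp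
  qed
qed

lemma foldl_head: "s \<noteq> [] \<Longrightarrow> hd s \<in> S \<Longrightarrow>
   \<exists>h t. foldl (\<lambda>s x. push x s) s x = h # t \<and> cleq S C (hd s) h"
proof (induction x arbitrary: s)
  case Nil then show ?case using cleq_refl by (cases s) auto
next
  case (Cons y x)
  from push_step[OF Cons.prems] have st: "push y s \<noteq> []" "hd (push y s) \<in> S"
    "cleq S C (hd s) (hd (push y s))" by auto
  from Cons.IH[OF st(1,2)] obtain h t where
    "foldl (\<lambda>s x. push x s) (push y s) x = h # t" "cleq S C (hd (push y s)) h" by blast
  then show ?case using st(3) cleq_trans by auto
qed

lemma push_set: "set s \<subseteq> S \<Longrightarrow> y \<in> S \<Longrightarrow> set (push y s) \<subseteq> S"
  unfolding push_def using clos by (auto dest: in_set_butlastD)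

lemma foldl_set: "set s \<subseteq> S \<Longrightarrow> set x \<subseteq> S \<Longrightarrow> set (foldl (\<lambda>s x. push x s) s x) \<subseteq> S"
  by (induction x arbitrary: s) (auto simp: push_set)

lemma ident_src: assumes "a \<in> Ids S C" "src S C a = src S C b" "b \<in> S" shows "C a b = Some b"
proof -
  obtain e where e: "e \<in> Ids S C" "C e a = Some a" using has_src[OF Ids_S[OF assms(1)]] by blast
  have "a = e" using ident_r[OF assms(1) e(2)] .
  then have "C a a = Some a" using e by simp
  then have "src S C a = a" using src_eq[OF assms(1)] by simp
  then show ?thesis using src[OF assms(3)] assms(2) by simp
qed

lemma cm_U_to_S:
  assumes ab: "a \<in> S" "b \<in> S" "src S C a = src S C b"
    and w: "w \<in> lists S" "uleq S C [a] w" "uleq S C [b] w"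
  shows "\<exists>h\<in>S. cleq S C a h \<and> cleq S C b h \<and> uleq S C [h] w"
proof (cases "a \<in> Ids S C")
  case True
  have "C a b = Some b" using ident_src[OF True ab(3) ab(2)] .
  then have "cleq S C a b" using ab unfolding cleq_def by blast
  then show ?thesis using ab w cleq_refl by blast
next
  case an: False
  show ?thesis
  proof (cases "b \<in> Ids S C")
    case True
    have "C b a = Some a" using ident_src[OF True ab(3)[symmetric] ab(1)] .
    then have "cleq S C b a" using ab unfolding cleq_def by blast
    then show ?thesis using ab w cleq_refl by blast
  next
    case bn: False
    obtain x where x: "x \<in> lists S" "ueq S C ([a] @ x) w" using w unfolding uleq_def by blast
    obtain y where y: "y \<in> lists S" "ueq S C ([b] @ y) w" using w unfolding uleq_def by blast
    have na: "nf ([a] @ x) = foldl (\<lambda>s x. push x s) [a] x"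
      using push_app[OF an, of "[]"] by (simp add: nf_def)
    have nb: "nf ([b] @ y) = foldl (\<lambda>s x. push x s) [b] y"
      using push_app[OF bn, of "[]"] by (simp add: nf_def)
    obtain h t where ht: "foldl (\<lambda>s x. push x s) [a] x = h # t" "cleq S C a h"
      using foldl_head[of "[a]" x] ab by auto
    obtain h' t' where ht': "foldl (\<lambda>s x. push x s) [b] y = h' # t'" "cleq S C b h'"
      using foldl_head[of "[b]" y] ab by auto
    have "nf ([a] @ x) = nf ([b] @ y)" using ueq_nf_eq x(2) y(2) ueq_sym ueq_trans by metis
    then have "h' = h" "t' = t" using na nb ht ht' by auto
    have setS: "set (h # t) \<subseteq> S" using foldl_set[of "[a]" x] ab x ht by auto
    have "ueq S C (h # t) w" using ueq_to_nf[of "[a] @ x"] na ht x(2) ueq_sym ueq_trans by metis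
    then have "uleq S C [h] w" using setS unfolding uleq_def by auto
    then show ?thesis using ht ht' \<open>h' = h\<close> setS by auto
  qed
qed

lemma uleq_cleq: assumes "cleq S C m h" "uleq S C [h] w" shows "uleq S C [m] w"
proof -
  obtain c where c: "c \<in> S" "C m c = Some h" using assms unfolding cleq_def by blast
  obtain x where x: "x \<in> lists S" "ueq S C ([h] @ x) w" using assms unfolding uleq_def by blast
  have "ueq S C ([] @ [m, c] @ x) ([] @ [h] @ x)" by (rule ueq_ctxt[OF ueq_mult[where S=S and C=C, OF c(2)]])
  then have u: "ueq S C ([m] @ (c # x)) w" using x(2) ueq_trans by simp
  have "c # x \<in> lists S" using c x by simp
  then show ?thesis using u unfolding uleq_def by (rule bexI[rotated])
qed

lemma lub_S_to_U:
  assumes ab: "a \<in> S" "b \<in> S" "src S C a = src S C b" and m: "is_lub S (cleq S C) a b m"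
  shows "is_lub (lists S) (uleq S C) [a] [b] [m]"
proof -
  have mS: "m \<in> S" and am: "cleq S C a m" and bm: "cleq S C b m"
    and mmin: "\<And>w. w \<in> S \<Longrightarrow> cleq S C a w \<Longrightarrow> cleq S C b w \<Longrightarrow> cleq S C m w"
    using m unfolding is_lub_def by auto
  have 1: "uleq S C [u] [m]" if cu: "cleq S C u m" for u
  proof -
    obtain c where "c \<in> S" "C u c = Some m" using cu unfolding cleq_def by blast
    then show ?thesis unfolding uleq_def using ueq_mult[where S=S and C=C] by force
  qed
  have 2: "uleq S C [m] w" if "w \<in> lists S" "uleq S C [a] w" "uleq S C [b] w" for w
  proof -
    from cm_U_to_S[OF ab that] obtain h where "h \<in> S" "cleq S C a h" "cleq S C b h" "uleq S C [h] w"
      by blast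
    then show ?thesis using mmin uleq_cleq by blast
  qed
  show ?thesis unfolding is_lub_def using mS 1 am bm 2 by auto
qed

lemma part1:
  assumes ab: "a \<in> S" "b \<in> S" "src S C a = src S C b"
  shows
      "((\<exists>m. is_lub (lists S) (uleq S C) [a] [b] m)
         \<longleftrightarrow> (\<exists>w\<in>lists S. uleq S C [a] w \<and> uleq S C [b] w)) \<and>
      ((\<exists>w\<in>lists S. uleq S C [a] w \<and> uleq S C [b] w)
         \<longleftrightarrow> (\<exists>m. is_lub S (cleq S C) a b m)) \<and>
      ((\<exists>m. is_lub S (cleq S C) a b m)
         \<longleftrightarrow> (\<exists>w\<in>S. cleq S C a w \<and> cleq S C b w)) \<and>
      (\<forall>m. is_lub S (cleq S C) a b m \<longrightarrow> is_lub (lists S) (uleq S C) [a] [b] [m])"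
proof -
  have i1: "(\<exists>m. is_lub (lists S) (uleq S C) [a] [b] m) \<Longrightarrow> (\<exists>w\<in>lists S. uleq S C [a] w \<and> uleq S C [b] w)"
    unfolding is_lub_def by blast
  have i2: "(\<exists>w\<in>lists S. uleq S C [a] w \<and> uleq S C [b] w) \<Longrightarrow> (\<exists>w\<in>S. cleq S C a w \<and> cleq S C b w)"
    using cm_U_to_S[OF ab] by blast
  have i3: "(\<exists>w\<in>S. cleq S C a w \<and> cleq S C b w) \<Longrightarrow> (\<exists>m. is_lub S (cleq S C) a b m)"
    using lcm_exists[OF ab] by blast
  have i4: "(\<exists>m. is_lub S (cleq S C) a b m) \<Longrightarrow> (\<exists>m. is_lub (lists S) (uleq S C) [a] [b] m)"
    using lub_S_to_U[OF ab] by blast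
  have i5: "(\<exists>m. is_lub S (cleq S C) a b m) \<Longrightarrow> (\<exists>w\<in>S. cleq S C a w \<and> cleq S C b w)"
    unfolding is_lub_def by blast
  show ?thesis using i1 i2 i3 i4 i5 lub_S_to_U[OF ab] by blast
qed

end

lemma op_ident: "is_ident S (\<lambda>x y. C y x) = is_ident S C"
  by (rule ext) (auto simp: is_ident_def)

lemma op_Ids: "Ids S (\<lambda>x y. C y x) = Ids S C"
  unfolding Ids_def op_ident[of S C] by (rule refl)

lemma op_category: assumes "category S C" shows "category S (\<lambda>x y. C y x)"
proof -
  have A: "\<forall>x\<in>S. \<forall>y\<in>S. \<forall>z\<in>S. Option.bind (C x y) (\<lambda>u. C u z) = Option.bind (C y z) (\<lambda>v. C x v)"
    and B: "\<forall>x\<in>S. \<forall>y\<in>S. \<forall>z\<in>S. C x y \<noteq> None \<longrightarrow> C y z \<noteq> None \<longrightarrow> Option.bind (C x y) (\<lambda>u. C u z) \<noteq> None"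
    using assms unfolding category_def by blast+
  show ?thesis unfolding category_def op_ident[of S C]
  proof (intro conjI)
    show "\<forall>x y z. C y x = Some z \<longrightarrow> x \<in> S \<and> y \<in> S \<and> z \<in> S" using assms unfolding category_def by blast
    show "\<forall>x\<in>S. \<forall>y\<in>S. \<forall>z\<in>S. Option.bind (C y x) (\<lambda>u. C z u) = Option.bind (C z y) (\<lambda>v. C v x)"
      using A by metis
    show "\<forall>x\<in>S. \<forall>y\<in>S. \<forall>z\<in>S. C y x \<noteq> None \<longrightarrow> C z y \<noteq> None \<longrightarrow> Option.bind (C y x) (\<lambda>u. C z u) \<noteq> None"
      using A B by metis
    show "\<forall>x\<in>S. (\<exists>e. is_ident S C e \<and> C x e \<noteq> None) \<and> (\<exists>e. is_ident S C e \<and> C e x \<noteq> None)"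
      using assms unfolding category_def by blast
  qed
qed

lemma op_src: "src S (\<lambda>x y. C y x) = tgt S C"
  unfolding src_def tgt_def op_ident[of S C] by (rule refl)

lemma op_tgt: "tgt S (\<lambda>x y. C y x) = src S C"
  unfolding src_def tgt_def op_ident[of S C] by (rule refl)

lemma op_cleq: "cleq S (\<lambda>x y. C y x) = cleqL S C"
  unfolding cleq_def cleqL_def by (rule refl)

lemma op_cleqL: "cleqL S (\<lambda>x y. C y x) = cleq S C"
  unfolding cleq_def cleqL_def by (rule refl)

lemma op_gcd: assumes "gcd_category S C" shows "gcd_category S (\<lambda>x y. C y x)"
proof -
  interpret gc S C using assms by unfold_locales
  have con: "\<forall>x y. C y x \<noteq> None \<longrightarrow> C y x \<in> Some ` Ids S C \<longrightarrow> x \<in> Ids S C"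
  proof (intro allI impI)
    fix x y assume "C y x \<noteq> None" "C y x \<in> Some ` Ids S C"
    then obtain e where e: "e \<in> Ids S C" "C y x = Some e" by auto
    have "y \<in> Ids S C" using conical[OF e(2) e(1)] .
    then have "e = x" using ident_l e(2) by blast
    then show "x \<in> Ids S C" using e by simp
  qed
  show ?thesis unfolding gcd_category_def op_Ids[of S C] op_src[of S C] op_tgt[of S C] op_cleq[of S C] op_cleqL[of S C]
    using op_category[OF cat] con gcd_parts by blast
qed

lemma op_ueq: "ueq S (\<lambda>x y. C y x) u v \<Longrightarrow> ueq S C (rev u) (rev v)"
proof (induction rule: ueq.induct)
  case (ueq_ctxt u v p q)
  then show ?case using ueq.ueq_ctxt[OF ueq_ctxt.IH, of "rev q" "rev p"] by simp
next
  case (ueq_id e) then show ?case by (simp add: op_Ids[of S C] ueq.ueq_id)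
next
  case (ueq_mult x y z) then show ?case by (simp add: ueq.ueq_mult)
qed (auto intro: ueq.intros)

lemma op_ueq_iff: "ueq S (\<lambda>x y. C y x) (rev u) (rev v) \<longleftrightarrow> ueq S C u v"
  using op_ueq[of S C "rev u" "rev v"] op_ueq[of S "\<lambda>x y. C y x" u v] by auto

lemma op_uleqL: "uleqL S C u v \<longleftrightarrow> uleq S (\<lambda>x y. C y x) (rev u) (rev v)"
proof -
  have "uleqL S C u v \<longleftrightarrow> (\<exists>x\<in>lists S. ueq S (\<lambda>x y. C y x) (rev u @ rev x) (rev v))"
    unfolding uleqL_def using op_ueq_iff[of S C] by (metis rev_append)
  also have "\<dots> \<longleftrightarrow> uleq S (\<lambda>x y. C y x) (rev u) (rev v)"
    unfolding uleq_def by (metis rev_rev_ident set_rev in_lists_conv_set)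
  finally show ?thesis .
qed

lemma op_lub: "is_lub (lists S) (uleqL S C) u v m \<longleftrightarrow>
   is_lub (lists S) (uleq S (\<lambda>x y. C y x)) (rev u) (rev v) (rev m)"
  unfolding is_lub_def op_uleqL
  by (metis rev_rev_ident set_rev in_lists_conv_set)

theorem proposition5p10:
  fixes S :: "'a set" and C :: "'a \<Rightarrow> 'a \<Rightarrow> 'a option" and a b :: 'a
  assumes "gcd_category S C" and "a \<in> S" and "b \<in> S"
  shows
   "(src S C a = src S C b \<longrightarrow>
      ((\<exists>m. is_lub (lists S) (uleq S C) [a] [b] m)
         \<longleftrightarrow> (\<exists>w\<in>lists S. uleq S C [a] w \<and> uleq S C [b] w)) \<and>
      ((\<exists>w\<in>lists S. uleq S C [a] w \<and> uleq S C [b] w)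
         \<longleftrightarrow> (\<exists>m. is_lub S (cleq S C) a b m)) \<and>
      ((\<exists>m. is_lub S (cleq S C) a b m)
         \<longleftrightarrow> (\<exists>w\<in>S. cleq S C a w \<and> cleq S C b w)) \<and>
      (\<forall>m. is_lub S (cleq S C) a b m \<longrightarrow> is_lub (lists S) (uleq S C) [a] [b] [m])) \<and>
    (tgt S C a = tgt S C b \<longrightarrow>
      ((\<exists>m. is_lub (lists S) (uleqL S C) [a] [b] m)
         \<longleftrightarrow> (\<exists>w\<in>lists S. uleqL S C [a] w \<and> uleqL S C [b] w)) \<and>
      ((\<exists>w\<in>lists S. uleqL S C [a] w \<and> uleqL S C [b] w)
         \<longleftrightarrow> (\<exists>m. is_lub S (cleqL S C) a b m)) \<and>
      ((\<exists>m. is_lub S (cleqL S C) a b m)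
         \<longleftrightarrow> (\<exists>w\<in>S. cleqL S C a w \<and> cleqL S C b w)) \<and>
      (\<forall>m. is_lub S (cleqL S C) a b m \<longrightarrow> is_lub (lists S) (uleqL S C) [a] [b] [m]))"
proof (intro conjI impI)
  interpret g: gc S C using assms(1) by unfold_locales
  interpret d: gc S "\<lambda>x y. C y x" using op_gcd[OF assms(1)] by unfold_locales
  assume "src S C a = src S C b"
  note P = g.part1[OF assms(2,3) this]
  show "(\<exists>m. is_lub (lists S) (uleq S C) [a] [b] m) \<longleftrightarrow> (\<exists>w\<in>lists S. uleq S C [a] w \<and> uleq S C [b] w)"
    using P by blast
  show "(\<exists>w\<in>lists S. uleq S C [a] w \<and> uleq S C [b] w) \<longleftrightarrow> (\<exists>m. is_lub S (cleq S C) a b m)"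
    using P by blast
  show "(\<exists>m. is_lub S (cleq S C) a b m) \<longleftrightarrow> (\<exists>w\<in>S. cleq S C a w \<and> cleq S C b w)"
    using P by blast
  show "\<forall>m. is_lub S (cleq S C) a b m \<longrightarrow> is_lub (lists S) (uleq S C) [a] [b] [m]"
    using P by blast
next
  interpret g: gc S C using assms(1) by unfold_locales
  interpret d: gc S "\<lambda>x y. C y x" using op_gcd[OF assms(1)] by unfold_locales
  assume "tgt S C a = tgt S C b"
  then have "src S (\<lambda>x y. C y x) a = src S (\<lambda>x y. C y x) b" by (simp add: op_src[of S C])
  note P = d.part1[OF assms(2,3) this, unfolded op_cleq[of S C]]
  have L: "(\<exists>m. is_lub (lists S) (uleqL S C) [a] [b] m) \<longleftrightarrow>
      (\<exists>m. is_lub (lists S) (uleq S (\<lambda>x y. C y x)) [a] [b] m)"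
    using op_lub[of S C "[a]" "[b]"] by (metis rev_rev_ident rev_singleton_conv)
  have W: "(\<exists>w\<in>lists S. uleqL S C [a] w \<and> uleqL S C [b] w) \<longleftrightarrow>
      (\<exists>w\<in>lists S. uleq S (\<lambda>x y. C y x) [a] w \<and> uleq S (\<lambda>x y. C y x) [b] w)"
    unfolding op_uleqL by (metis rev_rev_ident set_rev in_lists_conv_set rev_singleton_conv)
  show "(\<exists>m. is_lub (lists S) (uleqL S C) [a] [b] m) \<longleftrightarrow> (\<exists>w\<in>lists S. uleqL S C [a] w \<and> uleqL S C [b] w)"
    using P L W by blast
  show "(\<exists>w\<in>lists S. uleqL S C [a] w \<and> uleqL S C [b] w) \<longleftrightarrow> (\<exists>m. is_lub S (cleqL S C) a b m)"
    using P W by blast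
  show "(\<exists>m. is_lub S (cleqL S C) a b m) \<longleftrightarrow> (\<exists>w\<in>S. cleqL S C a w \<and> cleqL S C b w)"
    using P by blast
  show "\<forall>m. is_lub S (cleqL S C) a b m \<longrightarrow> is_lub (lists S) (uleqL S C) [a] [b] [m]"
    using P op_lub[of S C "[a]" "[b]"] by simp
qed

end
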